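(* Let $k,m$ be positive integers, let $N(\mu_1,I+\Sigma_1),\dots,N(\mu_k,I+\Sigma_k)$ be Gaussians on $\mathbb{R}^d$, and let $P_1,\dots,P_k$ be real polynomials in $X=(X_1,\dots,X_d)$ of degree at most $m$. Let \[f(X,y)=\sum_{j=1}^kP_j(Xy)e^{\mu_j(X)y+\frac12\Sigma_j(X)y^2}=\sum_{r\ge0}\frac{f_r(X)}{r!}y^r.\] Let $\kappa=(m+1)(2^k-1)$. Then there are polynomials $R_{j,l}(X)$ in $d$ variables, for $0\le j\le\kappa$ and $0\le l\le\kappa-j$, such that: (1) $R_{j,l}$ is homogeneous of degree $\kappa-j+l$, and $R_{\kappa,0}=1$; (2) each $R_{j,l}$ is $(A,B)$-simple with respect to $\{\mu_1(X),\Sigma_1(X),\dots,\mu_k(X),\Sigma_k(X)\}$ for some $A,B$ depending only on $k,m$; (3) for all integers $a\ge\kappa$, \[\sum_{j=0}^{\kappa}\sum_{l=0}^{\kappa-j}\frac{f_{a-\kappa+j-l}(X)\,R_{j,l}(X)}{(a-\kappa-l)!}=0,\] where terms with a negative factorial in the denominator are treated as $0$.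
   Context: $\mu(X)=\mu^TX$, $\Sigma(X)=X^T\Sigma X$, and $Xy=(X_1y,\dots,X_dy)$. $f(X,y)$ is regarded as a formal power series in $y$ whose coefficients are polynomials in $X$; the $f_r$ are its primary terms. Given a family $\mathcal{S}$ of polynomials in $X$, a polynomial $Q(X)$ is $(A,B)$-simple with respect to $\mathcal{S}$ if it is a linear combination of at most $A$ terms, all coefficients of magnitude at most $A$, each term a product of at most $B$ polynomials from $\mathcal{S}$. *)

theory Defs
  imports "HOL-Analysis.Analysis"
begin

text \<open>Points of R^d are represented as functions nat => real; only the
  coordinates 0..d-1 are used.\<close>

definition monomial :: "nat \<Rightarrow> (nat \<Rightarrow> nat) \<Rightarrow> (nat \<Rightarrow> real) \<Rightarrow> real" where
  "monomial d \<alpha> X = (\<Prod>i<d. X i ^ \<alpha> i)"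

definition poly_deg_le :: "nat \<Rightarrow> nat \<Rightarrow> ((nat \<Rightarrow> real) \<Rightarrow> real) \<Rightarrow> bool" where
  "poly_deg_le d m P \<longleftrightarrow> (\<exists>M c. finite M \<and>
      (\<forall>\<alpha>\<in>M. (\<forall>i\<ge>d. \<alpha> i = 0) \<and> sum \<alpha> {..<d} \<le> m) \<and>
      (\<forall>X. P X = (\<Sum>\<alpha>\<in>M. c \<alpha> * monomial d \<alpha> X)))"

definition hom_poly :: "nat \<Rightarrow> nat \<Rightarrow> ((nat \<Rightarrow> real) \<Rightarrow> real) \<Rightarrow> bool" where
  "hom_poly d n P \<longleftrightarrow> (\<exists>M c. finite M \<and>
      (\<forall>\<alpha>\<in>M. (\<forall>i\<ge>d. \<alpha> i = 0) \<and> sum \<alpha> {..<d} = n) \<and>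
      (\<forall>X. P X = (\<Sum>\<alpha>\<in>M. c \<alpha> * monomial d \<alpha> X)))"

definition simple_wrt :: "((nat \<Rightarrow> real) \<Rightarrow> real) set \<Rightarrow> nat \<Rightarrow> nat \<Rightarrow> ((nat \<Rightarrow> real) \<Rightarrow> real) \<Rightarrow> bool" where
  "simple_wrt S A B Q \<longleftrightarrow> (\<exists>T c L. T \<le> A \<and>
      (\<forall>t<T. \<bar>c t\<bar> \<le> real A \<and> length (L t) \<le> B \<and> set (L t) \<subseteq> S) \<and>
      (\<forall>X. Q X = (\<Sum>t<T. c t * prod_list (map (\<lambda>q. q X) (L t)))))"

definition lin_form :: "nat \<Rightarrow> (nat \<Rightarrow> real) \<Rightarrow> (nat \<Rightarrow> real) \<Rightarrow> real" where
  "lin_form d \<mu> X = (\<Sum>i<d. \<mu> i * X i)"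

definition quad_form :: "nat \<Rightarrow> (nat \<Rightarrow> nat \<Rightarrow> real) \<Rightarrow> (nat \<Rightarrow> real) \<Rightarrow> real" where
  "quad_form d S X = (\<Sum>i<d. \<Sum>i'<d. X i * S i i' * X i')"

text \<open>I + Sigma is a valid covariance matrix (symmetric positive semidefinite).\<close>
definition covariance_ok :: "nat \<Rightarrow> (nat \<Rightarrow> nat \<Rightarrow> real) \<Rightarrow> bool" where
  "covariance_ok d S \<longleftrightarrow> (\<forall>i<d. \<forall>i'<d. S i i' = S i' i) \<and>
     (\<forall>v. (\<Sum>i<d. v i * v i) + quad_form d S v \<ge> 0)"

definition gen_fun :: "nat \<Rightarrow> nat \<Rightarrow> (nat \<Rightarrow> nat \<Rightarrow> real) \<Rightarrow> (nat \<Rightarrow> nat \<Rightarrow> nat \<Rightarrow> real)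
    \<Rightarrow> (nat \<Rightarrow> (nat \<Rightarrow> real) \<Rightarrow> real) \<Rightarrow> (nat \<Rightarrow> real) \<Rightarrow> real \<Rightarrow> real" where
  "gen_fun d k \<mu> S P X y = (\<Sum>j<k. P j (\<lambda>i. X i * y) *
      exp (lin_form d (\<mu> j) X * y + quad_form d (S j) X * y\<^sup>2 / 2))"

definition primary_term :: "nat \<Rightarrow> nat \<Rightarrow> (nat \<Rightarrow> nat \<Rightarrow> real) \<Rightarrow> (nat \<Rightarrow> nat \<Rightarrow> nat \<Rightarrow> real)
    \<Rightarrow> (nat \<Rightarrow> (nat \<Rightarrow> real) \<Rightarrow> real) \<Rightarrow> nat \<Rightarrow> (nat \<Rightarrow> real) \<Rightarrow> real" where
  "primary_term d k \<mu> S P r X = (deriv ^^ r) (gen_fun d k \<mu> S P X) 0"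

end

theory Submission
  imports Defs
begin


lemma real_fps_nth_expansion:
  fixes f :: "real \<Rightarrow> real"
  assumes "f has_fps_expansion F"
  shows "fps_nth F n = (deriv ^^ n) f 0 / fact n"
proof -
  have main: "fps_nth G n = (deriv ^^ n) (eval_fps G) 0 / fact n" if "fps_conv_radius G > 0" for G :: "real fps"
    using that
  proof (induction n arbitrary: G)
    case 0
    thus ?case by (simp add: eval_fps_def)
  next
    case (Suc n G)
    have "(deriv ^^ Suc n) (eval_fps G) 0 = (deriv ^^ n) (deriv (eval_fps G)) 0"
      unfolding funpow_Suc_right o_def ..
    also have "eventually (\<lambda>z::real. z \<in> eball 0 (fps_conv_radius G)) (nhds 0)"
      using Suc.prems by (intro eventually_nhds_in_open) (auto simp: zero_ereal_def)
    hence "eventually (\<lambda>z. deriv (eval_fps G) z = eval_fps (fps_deriv G) z) (nhds 0)"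
      by eventually_elim (simp add: eval_fps_deriv)
    hence "(deriv ^^ n) (deriv (eval_fps G)) 0 = (deriv ^^ n) (eval_fps (fps_deriv G)) 0"
      by (intro higher_deriv_cong_ev refl)
    also have "\<dots> / fact n = fps_nth (fps_deriv G) n"
      using Suc.prems fps_conv_radius_deriv[of G]
      by (intro Suc.IH [symmetric]) auto
    also have "\<dots> / of_nat (Suc n) = fps_nth G (Suc n)"
      by (simp add: fps_deriv_def del: of_nat_Suc)
    finally show ?case by (simp add: field_split_simps)
  qed
  have "fps_nth F n = (deriv ^^ n) (eval_fps F) 0 / fact n"
    using assms by (intro main) (auto simp: has_fps_expansion_def)
  also have "(deriv ^^ n) (eval_fps F) 0 = (deriv ^^ n) f 0"
    using assms by (intro higher_deriv_cong_ev) (auto simp: has_fps_expansion_def)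
  finally show ?thesis .
qed

lemma real_fps_expansion_unique:
  fixes f :: "real \<Rightarrow> real"
  assumes "f has_fps_expansion F" "f has_fps_expansion G"
  shows "F = G"
  using real_fps_nth_expansion[OF assms(1)] real_fps_nth_expansion[OF assms(2)]
  by (simp add: fps_eq_iff)

lemma exp_sq_expansion:
  fixes c :: real
  shows "(\<lambda>y. exp (c * y\<^sup>2)) has_fps_expansion
     Abs_fps (\<lambda>n. if even n then c ^ (n div 2) / fact (n div 2) else 0)"
proof (rule has_fps_expansionI, rule always_eventually, rule allI)
  fix u :: real
  have "(\<lambda>n. (c*u\<^sup>2)^n /\<^sub>R fact n) sums exp (c*u\<^sup>2)" by (rule exp_converges)
  from sums_if[OF sums_zero this]
  have "(\<lambda>n. if even n then (c*u\<^sup>2) ^ (n div 2) /\<^sub>R fact (n div 2) else 0) sums exp (c*u\<^sup>2)"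
    by simp
  moreover have "(if even n then (c*u\<^sup>2) ^ (n div 2) /\<^sub>R fact (n div 2) else 0)
      = fps_nth (Abs_fps (\<lambda>n. if even n then c ^ (n div 2) / fact (n div 2) else 0)) n * u ^ n" for n
  proof (cases "even n")
    case True
    then obtain t where "n = 2*t" by blast
    have aux: "(u\<^sup>2) ^ t = (u ^ t)\<^sup>2"
      by (metis power_mult mult.commute)
    show ?thesis using \<open>n = 2*t\<close> aux by (simp add: power_mult_distrib power_mult field_simps)
  qed simp
  ultimately show "(\<lambda>n. fps_nth (Abs_fps (\<lambda>n. if even n then c ^ (n div 2) / fact (n div 2) else 0)) n * u ^ n) sums exp (c*u\<^sup>2)"
    by simp
qed

lemma exp_gauss_expansion:
  fixes a b :: real
  shows "\<exists>E. (\<lambda>y. exp (a * y + b * y\<^sup>2 / 2)) has_fps_expansion E \<and>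
     fps_deriv E = (fps_const a + fps_const b * fps_X) * E"
proof -
  define e where "e = (\<lambda>y::real. exp (a * y + b * y\<^sup>2 / 2))"
  obtain E2 where E2: "(\<lambda>y. exp ((b/2) * y\<^sup>2)) has_fps_expansion E2"
    using exp_sq_expansion by blast
  have "(\<lambda>y. exp (a*y) * exp ((b/2) * y\<^sup>2)) has_fps_expansion fps_exp a * E2"
    by (intro has_fps_expansion_mult has_fps_expansion_exp E2)
  moreover have "(\<lambda>y. exp (a*y) * exp ((b/2) * y\<^sup>2)) = e"
    by (auto simp: e_def exp_add[symmetric] field_simps)
  ultimately have eE: "e has_fps_expansion fps_exp a * E2" by simp
  have d: "deriv e = (\<lambda>y. (a + b * y) * e y)"
  proof
    fix y
    have "(e has_real_derivative (exp (a * y + b * y\<^sup>2 / 2) * (a + b * y))) (at y)"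
      unfolding e_def by (auto intro!: derivative_eq_intros simp: field_simps power2_eq_square)
    then show "deriv e y = (a + b * y) * e y"
      by (auto dest!: DERIV_imp_deriv simp: e_def)
  qed
  have "deriv e has_fps_expansion fps_deriv (fps_exp a * E2)"
    by (intro has_fps_expansion_deriv eE)
  moreover have "deriv e has_fps_expansion (fps_const a + fps_const b * fps_X) * (fps_exp a * E2)"
    unfolding d by (intro fps_expansion_intros eE)
  ultimately have "fps_deriv (fps_exp a * E2) = (fps_const a + fps_const b * fps_X) * (fps_exp a * E2)"
    by (rule real_fps_expansion_unique)
  with eE show ?thesis unfolding e_def by blast
qed



lemma monomial_scale:
  "monomial d \<alpha> (\<lambda>i. X i * y) = monomial d \<alpha> X * y ^ sum \<alpha> {..<d}"
  by (simp add: monomial_def power_mult_distrib prod.distrib power_sum)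

definition pdeg :: "real fps \<Rightarrow> nat \<Rightarrow> bool" where
  "pdeg Q n \<longleftrightarrow> (\<forall>i>n. fps_nth Q i = 0)"

lemma poly_expansion:
  assumes "poly_deg_le d m P"
  shows "\<exists>Q. (\<lambda>y. P (\<lambda>i. X i * y)) has_fps_expansion Q \<and> pdeg Q m"
proof -
  obtain M c where M: "finite M" "\<forall>\<alpha>\<in>M. (\<forall>i\<ge>d. \<alpha> i = 0) \<and> sum \<alpha> {..<d} \<le> m"
    and P: "\<forall>X. P X = (\<Sum>\<alpha>\<in>M. c \<alpha> * monomial d \<alpha> X)"
    using assms unfolding poly_deg_le_def by blast
  define Q where "Q = (\<Sum>\<alpha>\<in>M. fps_const (c \<alpha> * monomial d \<alpha> X) * fps_X ^ sum \<alpha> {..<d})"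
  have fe: "(\<lambda>y. P (\<lambda>i. X i * y)) = (\<lambda>y. \<Sum>\<alpha>\<in>M. (c \<alpha> * monomial d \<alpha> X) * y ^ sum \<alpha> {..<d})"
    using P by (simp add: monomial_scale mult.assoc)
  have "(\<lambda>y. \<Sum>\<alpha>\<in>M. (c \<alpha> * monomial d \<alpha> X) * y ^ sum \<alpha> {..<d}) has_fps_expansion Q"
    unfolding Q_def by (intro has_fps_expansion_sum has_fps_expansion_cmult_left has_fps_expansion_fps_X_power)
  moreover have "pdeg Q m"
    unfolding pdeg_def Q_def using M(2) by (auto simp: fps_sum_nth intro!: sum.neutral)
  ultimately show ?thesis using fe by auto
qed

type_synonym pr = "((nat \<Rightarrow> real) \<Rightarrow> real) \<times> ((nat \<Rightarrow> real) \<Rightarrow> real)"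

definition Lop :: "(nat \<Rightarrow> real) \<Rightarrow> pr \<Rightarrow> real fps \<Rightarrow> real fps" where
  "Lop X p G = fps_deriv G - (fps_const (fst p X) + fps_const (snd p X) * fps_X) * G"

fun opr :: "(nat \<Rightarrow> real) \<Rightarrow> pr list \<Rightarrow> real fps \<Rightarrow> real fps" where
  "opr X [] G = G"
| "opr X (p # ps) G = Lop X p (opr X ps G)"

lemma opr_add: "opr X ps (G + H) = opr X ps G + opr X ps H"
  by (induction ps) (auto simp: Lop_def algebra_simps)

lemma opr_zero: "opr X ps 0 = 0"
  by (induction ps) (auto simp: Lop_def)

lemma opr_sum: "opr X ps (\<Sum>j\<in>A. G j) = (\<Sum>j\<in>A. opr X ps (G j))"
  by (induction A rule: infinite_finite_induct) (auto simp: opr_zero opr_add)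

lemma opr_append: "opr X (ps @ qs) G = opr X ps (opr X qs G)"
  by (induction ps) auto

lemma Lop_mul:
  assumes "fps_deriv E = (fps_const a + fps_const b * fps_X) * E"
  shows "Lop X p (Q * E) = (fps_deriv Q + (fps_const (a - fst p X) + fps_const (b - snd p X) * fps_X) * Q) * E"
  unfolding Lop_def using assms by (simp add: algebra_simps flip: fps_const_sub)

lemma deriv_pow_nth:
  fixes G :: "real fps"
  shows "fps_nth ((fps_deriv ^^ j) G) i = fps_nth G (i + j) * fact (i + j) / fact i"
proof (induction j arbitrary: G i)
  case 0 then show ?case by simp
next
  case (Suc j)
  have "fps_nth ((fps_deriv ^^ Suc j) G) i = fps_nth ((fps_deriv ^^ j) (fps_deriv G)) i"
    by (simp add: funpow_Suc_right del: funpow.simps)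
  also have "\<dots> = fps_nth (fps_deriv G) (i + j) * fact (i + j) / fact i" by (rule Suc.IH)
  also have "\<dots> = fps_nth G (i + Suc j) * fact (i + Suc j) / fact i"
    by (simp add: algebra_simps)
  finally show ?case .
qed

lemma pdeg_step:
  assumes "pdeg Q n"
  shows "pdeg (fps_deriv Q + (fps_const c + fps_const e * fps_X) * Q) (Suc n)"
  unfolding pdeg_def
proof (intro allI impI)
  fix i assume i: "i > Suc n"
  then obtain i' where i': "i = Suc i'" by (cases i) auto
  have "fps_nth (fps_const e * fps_X * Q) i = e * fps_nth Q i'"
    using i' by (simp add: mult.assoc fps_X_mult_nth)
  then show "fps_nth (fps_deriv Q + (fps_const c + fps_const e * fps_X) * Q) i = 0"
    using assms i i' unfolding pdeg_def by (simp add: distrib_right)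
qed

lemma pdeg_kill:
  assumes "pdeg Q n" "t > n"
  shows "(fps_deriv ^^ t) Q = 0"
  using assms by (auto simp: fps_eq_iff deriv_pow_nth pdeg_def)

lemma opr_same:
  assumes "fps_deriv E = (fps_const a + fps_const b * fps_X) * E" "fst p X = a" "snd p X = b"
  shows "opr X (replicate t p) (Q * E) = ((fps_deriv ^^ t) Q) * E"
  by (induction t) (auto simp: Lop_mul[OF assms(1)] assms(2,3))

lemma opr_general:
  assumes "fps_deriv E = (fps_const a + fps_const b * fps_X) * E" "pdeg Q n"
  shows "\<exists>Q'. opr X ps (Q * E) = Q' * E \<and> pdeg Q' (n + length ps)"
proof (induction ps)
  case Nil then show ?case using assms by auto
next
  case (Cons p ps)
  then obtain Q' where "opr X ps (Q * E) = Q' * E" "pdeg Q' (n + length ps)" by blast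
  then show ?case
    by (auto simp: Lop_mul[OF assms(1)] intro!: pdeg_step)
qed



type_synonym cf = "nat \<Rightarrow> nat \<Rightarrow> (nat \<Rightarrow> real) \<Rightarrow> real"

definition stepc :: "pr \<Rightarrow> cf \<Rightarrow> cf" where
  "stepc p C j l X = (if j = 0 then 0 else C (j - 1) l X) + of_nat (l + 1) * C j (l + 1) X
     - fst p X * C j l X - (if l = 0 then 0 else snd p X * C j (l - 1) X)"

fun coefs :: "pr list \<Rightarrow> cf" where
  "coefs [] = (\<lambda>j l X. if j = 0 \<and> l = 0 then 1 else 0)"
| "coefs (p # ps) = stepc p (coefs ps)"

lemma coefs_support: "length ps < j + l \<Longrightarrow> coefs ps j l X = 0"
proof (induction ps arbitrary: j l)
  case Nil then show ?case by auto
next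
  case (Cons p ps)
  then show ?case by (auto simp: stepc_def)
qed

lemma coefs_lead: "coefs ps (length ps) 0 = (\<lambda>X. 1)"
proof (induction ps)
  case Nil then show ?case by auto
next
  case (Cons p ps)
  then show ?case by (auto simp: stepc_def coefs_support)
qed

definition NF :: "(nat \<Rightarrow> real) \<Rightarrow> nat \<Rightarrow> cf \<Rightarrow> real fps \<Rightarrow> real fps" where
  "NF X N C G = (\<Sum>j\<le>N. \<Sum>l\<le>N. fps_const (C j l X) * fps_X ^ l * (fps_deriv ^^ j) G)"

lemma NF_step:
  assumes supp: "\<And>j l. n < j + l \<Longrightarrow> C j l X = 0" and N: "n < N"
  shows "NF X N (stepc p C) G = Lop X p (NF X N C G)"
proof -
  obtain N' where N': "N = Suc N'" using N by (cases N) auto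
  define g where "g j = (fps_deriv ^^ j) G" for j
  define c where "c j l = C j l X" for j l
  define a where "a = fst p X"
  define b where "b = snd p X"
  have gS: "g (Suc j) = fps_deriv (g j)" for j by (simp add: g_def)
  have T: "fps_deriv (fps_const (c j l) * fps_X ^ l * g j)
     = fps_const (c j l) * of_nat l * fps_X ^ (l - 1) * g j + fps_const (c j l) * fps_X ^ l * g (Suc j)" for j l
    by (simp add: gS fps_deriv_power algebra_simps fps_of_nat)
  define t where "t j l = fps_const (c j l) * fps_X ^ l * g j" for j l
  have L1: "Lop X p (NF X N C G) = (\<Sum>j\<le>N. \<Sum>l\<le>N. fps_deriv (t j l) - (fps_const a + fps_const b * fps_X) * t j l)"
    unfolding Lop_def NF_def g_def[symmetric] c_def[symmetric] a_def[symmetric] b_def[symmetric] t_def[symmetric]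
    by (simp only: fps_deriv_sum sum_distrib_left sum_subtractf)
  have L2: "fps_deriv (t j l) - (fps_const a + fps_const b * fps_X) * t j l
     = fps_const (c j l) * of_nat l * fps_X ^ (l - 1) * g j + fps_const (c j l) * fps_X ^ l * g (Suc j)
       - fps_const a * (fps_const (c j l) * fps_X ^ l * g j)
       - fps_const b * (fps_const (c j l) * fps_X ^ Suc l * g j)" for j l
    unfolding t_def T by (simp add: algebra_simps flip: fps_const_mult)
  have "Lop X p (NF X N C G) = (\<Sum>j\<le>N. \<Sum>l\<le>N. fps_const (c j l) * of_nat l * fps_X ^ (l - 1) * g j)
      + (\<Sum>j\<le>N. \<Sum>l\<le>N. fps_const (c j l) * fps_X ^ l * g (Suc j))
      - (\<Sum>j\<le>N. \<Sum>l\<le>N. fps_const a * (fps_const (c j l) * fps_X ^ l * g j))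
      - (\<Sum>j\<le>N. \<Sum>l\<le>N. fps_const b * (fps_const (c j l) * fps_X ^ Suc l * g j))"
    unfolding L1 L2 by (simp only: sum.distrib sum_subtractf)
  also have "\<dots> = (\<Sum>j\<le>N. \<Sum>l\<le>N. fps_const (of_nat (l + 1) * c j (l + 1)) * fps_X ^ l * g j)
      + (\<Sum>j\<le>N. \<Sum>l\<le>N. fps_const (if j = 0 then 0 else c (j - 1) l) * fps_X ^ l * g j)
      - (\<Sum>j\<le>N. \<Sum>l\<le>N. fps_const (a * c j l) * fps_X ^ l * g j)
      - (\<Sum>j\<le>N. \<Sum>l\<le>N. fps_const (if l = 0 then 0 else b * c j (l - 1)) * fps_X ^ l * g j)"
  proof -
    have e1: "(\<Sum>l\<le>N. fps_const (c j l) * of_nat l * fps_X ^ (l - 1) * g j)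
        = (\<Sum>l\<le>N. fps_const (of_nat (l + 1) * c j (l + 1)) * fps_X ^ l * g j)" for j
    proof -
      have "(\<Sum>l\<le>N. fps_const (c j l) * of_nat l * fps_X ^ (l - 1) * g j)
          = (\<Sum>l\<le>N'. fps_const (c j (Suc l)) * of_nat (Suc l) * fps_X ^ l * g j)"
        unfolding N' by (subst sum.atMost_Suc_shift) simp
      also have "\<dots> = (\<Sum>l\<le>N. fps_const (of_nat (l + 1) * c j (l + 1)) * fps_X ^ l * g j)"
        unfolding N' using supp N N' by (simp add: c_def algebra_simps fps_of_nat flip: fps_const_add fps_const_mult)
      finally show ?thesis .
    qed
    have e2: "(\<Sum>j\<le>N. \<Sum>l\<le>N. fps_const (c j l) * fps_X ^ l * g (Suc j))
        = (\<Sum>j\<le>N. \<Sum>l\<le>N. fps_const (if j = 0 then 0 else c (j - 1) l) * fps_X ^ l * g j)"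
    proof -
      have "(\<Sum>j\<le>N. \<Sum>l\<le>N. fps_const (if j = 0 then 0 else c (j - 1) l) * fps_X ^ l * g j)
          = (\<Sum>j\<le>N'. \<Sum>l\<le>N. fps_const (c j l) * fps_X ^ l * g (Suc j))"
        unfolding N' by (subst sum.atMost_Suc_shift) simp
      also have "\<dots> = (\<Sum>j\<le>N. \<Sum>l\<le>N. fps_const (c j l) * fps_X ^ l * g (Suc j))"
        unfolding N' using supp N N' by (simp add: c_def)
      finally show ?thesis by simp
    qed
    have e4: "(\<Sum>l\<le>N. fps_const b * (fps_const (c j l) * fps_X ^ Suc l * g j))
        = (\<Sum>l\<le>N. fps_const (if l = 0 then 0 else b * c j (l - 1)) * fps_X ^ l * g j)" for j
    proof -
      have "(\<Sum>l\<le>N. fps_const (if l = 0 then 0 else b * c j (l - 1)) * fps_X ^ l * g j)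
          = (\<Sum>l\<le>N'. fps_const (b * c j l) * fps_X ^ Suc l * g j)"
        unfolding N' by (subst sum.atMost_Suc_shift) simp
      also have "\<dots> = (\<Sum>l\<le>N. fps_const b * (fps_const (c j l) * fps_X ^ Suc l * g j))"
        unfolding N' using supp N N' by (simp add: c_def algebra_simps flip: fps_const_mult)
      finally show ?thesis by simp
    qed
    have e3: "(\<Sum>l\<le>N. fps_const a * (fps_const (c j l) * fps_X ^ l * g j))
        = (\<Sum>l\<le>N. fps_const (a * c j l) * fps_X ^ l * g j)" for j
      by (simp add: algebra_simps flip: fps_const_mult)
    show ?thesis by (simp only: e1 e2 e3 e4)
  qed
  also have "\<dots> = NF X N (stepc p C) G"
    unfolding NF_def stepc_def g_def[symmetric] c_def[symmetric] a_def[symmetric] b_def[symmetric]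
    by (simp add: sum.distrib sum_subtractf algebra_simps flip: fps_const_sub fps_const_add)
  finally show ?thesis ..
qed

lemma NF_base: "NF X N (coefs []) G = G"
proof -
  have "NF X N (coefs []) G = (\<Sum>j\<le>N. if j = 0 then (\<Sum>l\<le>N. if l = 0 then G else 0) else 0)"
  proof -
    have aux: "fps_const (if P then 1 else 0) * Y = (if P then Y else (0::real fps))" for P Y by simp
    have aux2: "(if P then Y else 0) * Z = (if P then Y * Z else (0::real fps))" for P Y Z by simp
    show ?thesis unfolding NF_def by (intro sum.cong refl) (auto simp: aux aux2 intro!: sum.cong)
  qed
  also have "\<dots> = G" by simp
  finally show ?thesis .
qed

lemma opr_NF: "length ps < N \<Longrightarrow> opr X ps G = NF X N (coefs ps) G"
proof (induction ps)
  case Nil then show ?case by (simp only: opr.simps NF_base)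
next
  case (Cons p ps)
  then have "opr X ps G = NF X N (coefs ps) G" by simp
  moreover have "NF X N (stepc p (coefs ps)) G = Lop X p (NF X N (coefs ps) G)"
    by (rule NF_step[where n = "length ps"]) (use Cons.prems coefs_support in auto)
  ultimately show ?case by simp
qed

lemma NF_nth:
  assumes "\<And>r. fps_nth G r = g r / fact r"
  shows "fps_nth (NF X N C G) n = (\<Sum>j\<le>N. \<Sum>l\<le>N. if l \<le> n then C j l X * g (n - l + j) / fact (n - l) else 0)"
proof -
  have d: "fps_nth ((fps_deriv ^^ j) G) i = g (i + j) / fact i" for i j
    by (simp add: deriv_pow_nth assms)
  show ?thesis
    unfolding NF_def by (auto simp: fps_sum_nth mult.assoc fps_X_power_mult_nth d intro!: sum.cong)
qed



lemma hom_polyI: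
  fixes I :: "'a set"
  assumes fin: "finite I" and ok: "\<forall>i\<in>I. (\<forall>t\<ge>d. \<alpha> i t = 0) \<and> sum (\<alpha> i) {..<d} = n"
    and P: "\<forall>X. P X = (\<Sum>i\<in>I. c i * monomial d (\<alpha> i) X)"
  shows "hom_poly d n P"
  unfolding hom_poly_def
proof (intro exI conjI allI)
  show "finite (\<alpha> ` I)" using fin by simp
  show "\<forall>\<gamma>\<in>\<alpha> ` I. (\<forall>t\<ge>d. \<gamma> t = 0) \<and> sum \<gamma> {..<d} = n" using ok by auto
  fix X
  have "P X = (\<Sum>\<gamma>\<in>\<alpha> ` I. \<Sum>i\<in>{i\<in>I. \<alpha> i = \<gamma>}. c i * monomial d (\<alpha> i) X)"
    using P fin by (simp add: sum.image_gen[of I _ \<alpha>])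
  also have "\<dots> = (\<Sum>\<gamma>\<in>\<alpha> ` I. (\<Sum>i\<in>{i\<in>I. \<alpha> i = \<gamma>}. c i) * monomial d \<gamma> X)"
    by (intro sum.cong refl) (auto simp: sum_distrib_right)
  finally show "P X = (\<Sum>\<gamma>\<in>\<alpha> ` I. (\<Sum>i\<in>{i\<in>I. \<alpha> i = \<gamma>}. c i) * monomial d \<gamma> X)" .
qed

lemma hom_polyE:
  assumes "hom_poly d n P"
  obtains M c where "finite M" "\<forall>\<alpha>\<in>M. (\<forall>i\<ge>d. \<alpha> i = 0) \<and> sum \<alpha> {..<d} = n"
    "\<forall>X. P X = (\<Sum>\<alpha>\<in>M. c \<alpha> * monomial d \<alpha> X)"
  using assms unfolding hom_poly_def by blast

lemma hom_zero: "hom_poly d n (\<lambda>X. 0)"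
  unfolding hom_poly_def by (rule exI[of _ "{}"]) auto

lemma hom_one: "hom_poly d 0 (\<lambda>X. 1)"
  by (rule hom_polyI[of "{()}" d "\<lambda>_ _. 0" _ _ "\<lambda>_. 1"]) (auto simp: monomial_def)

lemma hom_deg_eq: "hom_poly d n P \<Longrightarrow> n = n' \<Longrightarrow> hom_poly d n' P" by simp

lemma hom_add:
  assumes "hom_poly d n P" "hom_poly d n Q"
  shows "hom_poly d n (\<lambda>X. P X + Q X)"
proof -
  obtain M1 c1 where 1: "finite M1" "\<forall>\<alpha>\<in>M1. (\<forall>i\<ge>d. \<alpha> i = 0) \<and> sum \<alpha> {..<d} = n"
    "\<forall>X. P X = (\<Sum>\<alpha>\<in>M1. c1 \<alpha> * monomial d \<alpha> X)" using hom_polyE[OF assms(1)] by blast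
  obtain M2 c2 where 2: "finite M2" "\<forall>\<alpha>\<in>M2. (\<forall>i\<ge>d. \<alpha> i = 0) \<and> sum \<alpha> {..<d} = n"
    "\<forall>X. Q X = (\<Sum>\<alpha>\<in>M2. c2 \<alpha> * monomial d \<alpha> X)" using hom_polyE[OF assms(2)] by blast
  show ?thesis
    by (rule hom_polyI[of "M1 <+> M2" d "case_sum id id" n _ "case_sum c1 c2"])
       (use 1 2 in \<open>auto simp: sum.Plus o_def\<close>)
qed

lemma hom_scale:
  assumes "hom_poly d n P"
  shows "hom_poly d n (\<lambda>X. r * P X)"
proof -
  obtain M1 c1 where 1: "finite M1" "\<forall>\<alpha>\<in>M1. (\<forall>i\<ge>d. \<alpha> i = 0) \<and> sum \<alpha> {..<d} = n"
    "\<forall>X. P X = (\<Sum>\<alpha>\<in>M1. c1 \<alpha> * monomial d \<alpha> X)" using hom_polyE[OF assms(1)] by blast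
  show ?thesis
    by (rule hom_polyI[of M1 d id n _ "\<lambda>a. r * c1 a"]) (use 1 in \<open>auto simp: sum_distrib_left mult.assoc\<close>)
qed

lemma hom_diff:
  assumes "hom_poly d n P" "hom_poly d n Q"
  shows "hom_poly d n (\<lambda>X. P X - Q X)"
  using hom_add[OF assms(1) hom_scale[OF assms(2), of "-1"]] by simp

lemma monomial_add: "monomial d (\<lambda>t. a t + b t) X = monomial d a X * monomial d b X"
  by (simp add: monomial_def power_add prod.distrib)

lemma hom_mult:
  assumes "hom_poly d n P" "hom_poly d n' Q"
  shows "hom_poly d (n + n') (\<lambda>X. P X * Q X)"
proof -
  obtain M1 c1 where 1: "finite M1" "\<forall>\<alpha>\<in>M1. (\<forall>i\<ge>d. \<alpha> i = 0) \<and> sum \<alpha> {..<d} = n"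
    "\<forall>X. P X = (\<Sum>\<alpha>\<in>M1. c1 \<alpha> * monomial d \<alpha> X)" using hom_polyE[OF assms(1)] by blast
  obtain M2 c2 where 2: "finite M2" "\<forall>\<alpha>\<in>M2. (\<forall>i\<ge>d. \<alpha> i = 0) \<and> sum \<alpha> {..<d} = n'"
    "\<forall>X. Q X = (\<Sum>\<alpha>\<in>M2. c2 \<alpha> * monomial d \<alpha> X)" using hom_polyE[OF assms(2)] by blast
  show ?thesis
  proof (rule hom_polyI[of "M1 \<times> M2" d "\<lambda>(a, b) t. a t + b t" _ _ "\<lambda>(a, b). c1 a * c2 b"])
    show "finite (M1 \<times> M2)" using 1 2 by simp
    show "\<forall>i\<in>M1 \<times> M2. (\<forall>t\<ge>d. (case i of (a, b) \<Rightarrow> \<lambda>t. a t + b t) t = 0) \<and>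
        sum (case i of (a, b) \<Rightarrow> \<lambda>t. a t + b t) {..<d} = n + n'"
      using 1 2 by (auto simp: sum.distrib)
    show "\<forall>X. P X * Q X = (\<Sum>i\<in>M1 \<times> M2. (case i of (a, b) \<Rightarrow> c1 a * c2 b) *
         monomial d (case i of (a, b) \<Rightarrow> \<lambda>t. a t + b t) X)"
      using 1 2 by (auto simp: sum_product sum.cartesian_product monomial_add algebra_simps
          intro!: sum.cong)
  qed
qed

lemma hom_sum:
  assumes "finite I" "\<And>i. i \<in> I \<Longrightarrow> hom_poly d n (F i)"
  shows "hom_poly d n (\<lambda>X. \<Sum>i\<in>I. F i X)"
  using assms by (induction I rule: finite_induct) (auto intro: hom_zero hom_add)

lemma hom_coord:
  assumes "i < d"
  shows "hom_poly d 1 (\<lambda>X. X i)"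
proof (rule hom_polyI[of "{()}" d "\<lambda>_ t. if t = i then 1 else 0" _ _ "\<lambda>_. 1"])
  show "\<forall>x\<in>{()}. (\<forall>t\<ge>d. (if t = i then 1 else 0) = (0::nat)) \<and> (\<Sum>t<d. if t = i then 1 else 0) = (1::nat)"
    using assms by auto
  have "monomial d (\<lambda>t. if t = i then 1 else 0) X = X i" for X
    unfolding monomial_def using assms
    by (simp add: if_distrib[of "\<lambda>e. X _ ^ e"] prod.delta cong: if_cong)
  then show "\<forall>X. X i = (\<Sum>_\<in>{()}. 1 * monomial d (\<lambda>t. if t = i then 1 else 0) X)" by simp
qed simp

lemma hom_lin: "hom_poly d 1 (lin_form d \<mu>)"
proof -
  have "hom_poly d 1 (\<lambda>X. \<Sum>i<d. \<mu> i * X i)"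
    by (intro hom_sum hom_scale hom_coord) auto
  then show ?thesis unfolding lin_form_def .
qed

lemma hom_quad: "hom_poly d 2 (quad_form d S)"
proof -
  have "hom_poly d (1 + 1) (\<lambda>X. \<Sum>i<d. \<Sum>i'<d. S i i' * (X i * X i'))"
    by (intro hom_sum hom_scale hom_mult hom_coord) auto
  then have "hom_poly d 2 (\<lambda>X. \<Sum>i<d. \<Sum>i'<d. S i i' * (X i * X i'))" by (simp add: numeral_2_eq_2)
  then show ?thesis unfolding quad_form_def by (simp add: algebra_simps)
qed



lemma sum_lessThan_add_split:
  fixes T1 T2 :: nat
  shows "(\<Sum>t<T1 + T2. f t) = (\<Sum>t<T1. f t) + (\<Sum>t<T2. f (T1 + t))"
  by (induction T2) (auto simp: add_ac)

lemma sw_zero: "simple_wrt SS A B (\<lambda>X. 0)"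
  unfolding simple_wrt_def by (rule exI[of _ 0]) auto

lemma sw_one: "1 \<le> A \<Longrightarrow> simple_wrt SS A B (\<lambda>X. 1)"
  unfolding simple_wrt_def
  by (rule exI[of _ 1], rule exI[of _ "\<lambda>_. 1"], rule exI[of _ "\<lambda>_. []"]) auto

lemma sw_mono: "simple_wrt SS A B Q \<Longrightarrow> A \<le> A' \<Longrightarrow> B \<le> B' \<Longrightarrow> simple_wrt SS A' B' Q"
proof -
  assume a: "simple_wrt SS A B Q" "A \<le> A'" "B \<le> B'"
  obtain T1 c1 L1 where 1: "T1 \<le> A" "\<forall>t<T1. \<bar>c1 t\<bar> \<le> real A \<and> length (L1 t) \<le> B \<and> set (L1 t) \<subseteq> SS"
    "\<forall>X. Q X = (\<Sum>t<T1. c1 t * prod_list (map (\<lambda>q. q X) (L1 t)))"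
    using a(1) unfolding simple_wrt_def by blast
  have "real A \<le> real A'" using a(2) by simp
  then show ?thesis unfolding simple_wrt_def
    by (intro exI[of _ T1] exI[of _ c1] exI[of _ L1]) (use 1 a in \<open>auto intro: order_trans\<close>)
qed

lemma sw_add:
  assumes "simple_wrt SS A B P" "simple_wrt SS A' B Q"
  shows "simple_wrt SS (A + A') B (\<lambda>X. P X + Q X)"
proof -
  obtain T1 c1 L1 where 1: "T1 \<le> A" "\<forall>t<T1. \<bar>c1 t\<bar> \<le> real A \<and> length (L1 t) \<le> B \<and> set (L1 t) \<subseteq> SS"
    "\<forall>X. P X = (\<Sum>t<T1. c1 t * prod_list (map (\<lambda>q. q X) (L1 t)))"
    using assms(1) unfolding simple_wrt_def by blast
  obtain T2 c2 L2 where 2: "T2 \<le> A'" "\<forall>t<T2. \<bar>c2 t\<bar> \<le> real A' \<and> length (L2 t) \<le> B \<and> set (L2 t) \<subseteq> SS"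
    "\<forall>X. Q X = (\<Sum>t<T2. c2 t * prod_list (map (\<lambda>q. q X) (L2 t)))"
    using assms(2) unfolding simple_wrt_def by blast
  show ?thesis unfolding simple_wrt_def
  proof (intro exI conjI allI impI)
    show "T1 + T2 \<le> A + A'" using 1 2 by simp
    fix t assume t: "t < T1 + T2"
    show "\<bar>(\<lambda>t. if t < T1 then c1 t else c2 (t - T1)) t\<bar> \<le> real (A + A')"
    proof (cases "t < T1")
      case True then show ?thesis using 1 by (simp add: order_trans[of _ "real A"])
    next
      case False
      then have "t - T1 < T2" using t by simp
      then have "\<bar>c2 (t - T1)\<bar> \<le> real A'" using 2 by auto
      then show ?thesis using False by simp
    qed
    show "length ((\<lambda>t. if t < T1 then L1 t else L2 (t - T1)) t) \<le> B"
      using 1 2 t by auto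
    show "set ((\<lambda>t. if t < T1 then L1 t else L2 (t - T1)) t) \<subseteq> SS"
      using 1 2 t by auto
  next
    fix X
    show "P X + Q X = (\<Sum>t<T1 + T2. (\<lambda>t. if t < T1 then c1 t else c2 (t - T1)) t *
           prod_list (map (\<lambda>q. q X) ((\<lambda>t. if t < T1 then L1 t else L2 (t - T1)) t)))"
      using 1 2 by (simp add: sum_lessThan_add_split)
  qed
qed

lemma sw_scale:
  assumes "simple_wrt SS A B P" "1 \<le> R" "\<bar>r\<bar> \<le> real R"
  shows "simple_wrt SS (R * A) B (\<lambda>X. r * P X)"
proof -
  obtain T1 c1 L1 where 1: "T1 \<le> A" "\<forall>t<T1. \<bar>c1 t\<bar> \<le> real A \<and> length (L1 t) \<le> B \<and> set (L1 t) \<subseteq> SS"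
    "\<forall>X. P X = (\<Sum>t<T1. c1 t * prod_list (map (\<lambda>q. q X) (L1 t)))"
    using assms(1) unfolding simple_wrt_def by blast
  show ?thesis unfolding simple_wrt_def
  proof (intro exI conjI allI impI)
    show "T1 \<le> R * A" using 1 assms(2) by (metis le_trans mult_1 mult_le_mono1)
    fix t assume t: "t < T1"
    have "\<bar>r * c1 t\<bar> = \<bar>r\<bar> * \<bar>c1 t\<bar>" by (simp add: abs_mult)
    also have "\<dots> \<le> real R * real A" using 1 t assms(3) by (intro mult_mono) auto
    finally show "\<bar>(\<lambda>t. r * c1 t) t\<bar> \<le> real (R * A)" by simp
    show "length (L1 t) \<le> B" "set (L1 t) \<subseteq> SS" using 1 t by auto
  next
    fix X
    show "r * P X = (\<Sum>t<T1. (\<lambda>t. r * c1 t) t * prod_list (map (\<lambda>q. q X) (L1 t)))"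
      using 1 by (simp add: sum_distrib_left mult.assoc)
  qed
qed

lemma sw_mul:
  assumes "simple_wrt SS A B P" "s \<in> SS"
  shows "simple_wrt SS A (Suc B) (\<lambda>X. s X * P X)"
proof -
  obtain T1 c1 L1 where 1: "T1 \<le> A" "\<forall>t<T1. \<bar>c1 t\<bar> \<le> real A \<and> length (L1 t) \<le> B \<and> set (L1 t) \<subseteq> SS"
    "\<forall>X. P X = (\<Sum>t<T1. c1 t * prod_list (map (\<lambda>q. q X) (L1 t)))"
    using assms(1) unfolding simple_wrt_def by blast
  show ?thesis unfolding simple_wrt_def
  proof (intro exI conjI allI impI)
    show "T1 \<le> A" using 1 by simp
    fix t assume t: "t < T1"
    show "\<bar>c1 t\<bar> \<le> real A" using 1 t by auto
    show "length ((\<lambda>t. s # L1 t) t) \<le> Suc B" "set ((\<lambda>t. s # L1 t) t) \<subseteq> SS" using 1 t assms(2) by auto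
  next
    fix X
    show "s X * P X = (\<Sum>t<T1. c1 t * prod_list (map (\<lambda>q. q X) ((\<lambda>t. s # L1 t) t)))"
      using 1 by (simp add: sum_distrib_left algebra_simps)
  qed
qed

lemma sw_neg:
  assumes "simple_wrt SS A B P"
  shows "simple_wrt SS A B (\<lambda>X. - P X)"
  using sw_scale[OF assms, of 1 "-1"] by simp

fun Ab :: "nat \<Rightarrow> nat" where
  "Ab 0 = 1"
| "Ab (Suc n) = 4 * Suc n * Ab n"

lemma Ab_pos: "1 \<le> Ab n"
  by (induction n) auto

lemma stepc_split:
  "stepc p C j l = (\<lambda>X. ((if j = 0 then 0 else C (j - 1) l X) + of_nat (l + 1) * C j (l + 1) X)
     + (- (fst p X * C j l X)) + (- (if l = 0 then 0 else snd p X * C j (l - 1) X)))"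
  by (simp add: stepc_def fun_eq_iff)

lemma coefs_simple:
  assumes "\<forall>p\<in>set ps. fst p \<in> SS \<and> snd p \<in> SS"
  shows "simple_wrt SS (Ab (length ps)) (length ps) (coefs ps j l)"
  using assms
proof (induction ps arbitrary: j l)
  case Nil
  then show ?case by (auto intro: sw_one sw_zero)
next
  case (Cons p ps)
  define n where "n = length ps"
  have IH: "simple_wrt SS (Ab n) n (coefs ps j l)" for j l using Cons n_def by auto
  have p: "fst p \<in> SS" "snd p \<in> SS" using Cons.prems by auto
  have t1: "simple_wrt SS (Suc n * Ab n) (Suc n) (\<lambda>X. if j = 0 then 0 else coefs ps (j - 1) l X)"
  proof (cases "j = 0")
    case True then show ?thesis by (simp add: sw_zero)
  next
    case False then show ?thesis using IH[of "j - 1" l] by (auto elim!: sw_mono)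
  qed
  have t2: "simple_wrt SS (Suc n * Ab n) (Suc n) (\<lambda>X. of_nat (l + 1) * coefs ps j (l + 1) X)"
  proof (cases "l + 1 \<le> n")
    case True
    have "simple_wrt SS (Suc n * Ab n) n (\<lambda>X. of_nat (l + 1) * coefs ps j (l + 1) X)"
      by (rule sw_scale[OF IH]) (use True in auto)
    then show ?thesis by (rule sw_mono) auto
  next
    case False
    then have "coefs ps j (l + 1) = (\<lambda>X. 0)" using coefs_support[of ps j "l+1"] n_def by auto
    then show ?thesis by (simp add: sw_zero)
  qed
  have t3: "simple_wrt SS (Suc n * Ab n) (Suc n) (\<lambda>X. - (fst p X * coefs ps j l X))"
    by (rule sw_neg, rule sw_mono[OF sw_mul[OF IH p(1)]]) auto
  have t4: "simple_wrt SS (Suc n * Ab n) (Suc n) (\<lambda>X. - (if l = 0 then 0 else snd p X * coefs ps j (l - 1) X))"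
  proof (cases "l = 0")
    case True then show ?thesis by (simp add: sw_zero)
  next
    case False then show ?thesis
      using sw_neg[OF sw_mono[OF sw_mul[OF IH[of j "l - 1"] p(2)]]] by auto
  qed
  have fin: "simple_wrt SS (Suc n * Ab n + Suc n * Ab n + Suc n * Ab n + Suc n * Ab n) (Suc n) (coefs (p # ps) j l)"
    unfolding coefs.simps stepc_split by (intro sw_add t1 t2 t3 t4)
  have eq: "Suc n * Ab n + Suc n * Ab n + Suc n * Ab n + Suc n * Ab n = Ab (length (p # ps))"
     "Suc n = length (p # ps)" by (simp_all add: n_def algebra_simps)
  show ?case using fin by (simp only: eq(1)) (simp add: n_def)
qed

lemma coefs_hom:
  assumes "\<forall>p\<in>set ps. hom_poly d 1 (fst p) \<and> hom_poly d 2 (snd p)" "j \<le> length ps"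
  shows "hom_poly d (length ps - j + l) (coefs ps j l)"
  using assms
proof (induction ps arbitrary: j l)
  case Nil
  then show ?case by (cases "l = 0") (auto simp: hom_one hom_zero)
next
  case (Cons p ps)
  define n where "n = length ps"
  have IH: "j \<le> n \<Longrightarrow> hom_poly d (n - j + l) (coefs ps j l)" for j l using Cons n_def by auto
  have p: "hom_poly d 1 (fst p)" "hom_poly d 2 (snd p)" using Cons.prems by auto
  have j: "j \<le> Suc n" using Cons.prems n_def by auto
  have z: "coefs ps j l = (\<lambda>X. 0)" if "n < j + l" for j l using coefs_support[of ps j l] that n_def by auto
  have t1: "hom_poly d (Suc n - j + l) (\<lambda>X. if j = 0 then 0 else coefs ps (j - 1) l X)"
  proof (cases "j = 0")
    case True then show ?thesis by (simp add: hom_zero)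
  next
    case False then show ?thesis using IH[of "j - 1" l] j by (auto elim!: hom_deg_eq)
  qed
  have t2: "hom_poly d (Suc n - j + l) (\<lambda>X. of_nat (l + 1) * coefs ps j (l + 1) X)"
  proof (cases "j \<le> n")
    case True
    have "hom_poly d (n - j + (l + 1)) (\<lambda>X. of_nat (l + 1) * coefs ps j (l + 1) X)"
      by (rule hom_scale[OF IH]) (use True in simp)
    then show ?thesis by (rule hom_deg_eq) (use True in simp)
  next
    case False then show ?thesis using z[of j "l+1"] by (simp add: hom_zero)
  qed
  have t3: "hom_poly d (Suc n - j + l) (\<lambda>X. - (fst p X * coefs ps j l X))"
  proof (cases "j \<le> n")
    case True then show ?thesis using hom_scale[OF hom_mult[OF p(1) IH[of j l]], of "-1"]
      by (auto elim!: hom_deg_eq)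
  next
    case False then show ?thesis using z[of j l] by (simp add: hom_zero)
  qed
  have t4: "hom_poly d (Suc n - j + l) (\<lambda>X. - (if l = 0 then 0 else snd p X * coefs ps j (l - 1) X))"
  proof (cases "l = 0")
    case True then show ?thesis by (simp add: hom_zero)
  next
    case l: False
    show ?thesis
    proof (cases "j \<le> n")
      case True then show ?thesis using l hom_scale[OF hom_mult[OF p(2) IH[of j "l - 1"]], of "-1"]
        by (auto elim!: hom_deg_eq)
    next
      case False then show ?thesis using z[of j "l - 1"] l by (simp add: hom_zero)
    qed
  qed
  show ?case unfolding coefs.simps stepc_split n_def[symmetric] length_Cons
    by (intro hom_add t1 t2 t3 t4)
qed



fun fl :: "nat \<Rightarrow> (nat \<Rightarrow> nat \<Rightarrow> real) \<Rightarrow> (nat \<Rightarrow> nat \<Rightarrow> nat \<Rightarrow> real) \<Rightarrow> nat \<Rightarrow> nat \<Rightarrow> pr list" where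
  "fl d \<mu> S m 0 = []"
| "fl d \<mu> S m (Suc i) = replicate (2 ^ i * (m + 1)) (lin_form d (\<mu> i), quad_form d (S i)) @ fl d \<mu> S m i"

lemma fl_length: "length (fl d \<mu> S m i) = (m + 1) * (2 ^ i - 1)"
proof (induction i)
  case 0 then show ?case by simp
next
  case (Suc i)
  obtain q where q: "(2::nat) ^ i = Suc q" by (metis not0_implies_Suc power_not_zero zero_neq_numeral)
  then have "(2::nat) ^ Suc i = Suc (Suc (2 * q))" by simp
  then show ?case using Suc q by (simp add: algebra_simps)
qed

lemma fl_set: "p \<in> set (fl d \<mu> S m i) \<Longrightarrow> \<exists>j<i. p = (lin_form d (\<mu> j), quad_form d (S j))"
proof (induction i)
  case (Suc i)
  then show ?case by (auto intro: less_SucI)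
qed simp

lemma fl_kill_bound: "m + length (fl d \<mu> S m i) < 2 ^ i * (m + 1)"
proof -
  obtain q where q: "(2::nat) ^ i = Suc q" by (metis not0_implies_Suc power_not_zero zero_neq_numeral)
  show ?thesis unfolding fl_length q by (simp add: algebra_simps)
qed

lemma annihilate:
  assumes E: "fps_deriv E = (fps_const (lin_form d (\<mu> j) X) + fps_const (quad_form d (S j) X) * fps_X) * E"
    and Q: "pdeg Q m"
  shows "\<exists>Q'. opr X (fl d \<mu> S m i) (Q * E) = Q' * E \<and> pdeg Q' (m + length (fl d \<mu> S m i)) \<and> (j < i \<longrightarrow> Q' = 0)"
proof (induction i)
  case 0 then show ?case using Q by auto
next
  case (Suc i)
  then obtain Q' where Q': "opr X (fl d \<mu> S m i) (Q * E) = Q' * E" "pdeg Q' (m + length (fl d \<mu> S m i))"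
    "j < i \<longrightarrow> Q' = 0" by blast
  define rp where "rp = replicate (2 ^ i * (m + 1)) (lin_form d (\<mu> i), quad_form d (S i))"
  have split: "opr X (fl d \<mu> S m (Suc i)) (Q * E) = opr X rp (Q' * E)"
    by (simp add: rp_def opr_append Q'(1))
  show ?case
  proof (cases "j \<le> i")
    case True
    show ?thesis
    proof (cases "j < i")
      case True
      then show ?thesis using Q' split by (auto simp: opr_zero pdeg_def)
    next
      case False
      with \<open>j \<le> i\<close> have ji: "j = i" by simp
      have "opr X rp (Q' * E) = ((fps_deriv ^^ (2 ^ i * (m + 1))) Q') * E"
        unfolding rp_def by (rule opr_same[OF E]) (simp_all add: ji)
      also have "(fps_deriv ^^ (2 ^ i * (m + 1))) Q' = 0"
        by (rule pdeg_kill[OF Q'(2) fl_kill_bound])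
      finally show ?thesis using split by (auto intro: exI[of _ 0] simp: pdeg_def)
    qed
  next
    case False
    obtain Q'' where "opr X rp (Q' * E) = Q'' * E" "pdeg Q'' (m + length (fl d \<mu> S m i) + length rp)"
      using opr_general[OF E Q'(2)] by blast
    then show ?thesis using split False by (auto simp: rp_def algebra_simps)
  qed
qed



theorem lemma5p4:
  fixes k m :: nat
  assumes "0 < k" and "0 < m"
  defines "\<kappa> \<equiv> (m + 1) * (2 ^ k - 1)"
  shows "\<exists>A B :: nat. \<forall>d (\<mu> :: nat \<Rightarrow> nat \<Rightarrow> real) (S :: nat \<Rightarrow> nat \<Rightarrow> nat \<Rightarrow> real)
            (P :: nat \<Rightarrow> (nat \<Rightarrow> real) \<Rightarrow> real).
     0 < d \<longrightarrow> (\<forall>j<k. covariance_ok d (S j)) \<longrightarrow> (\<forall>j<k. poly_deg_le d m (P j)) \<longrightarrow>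
     (\<exists>R :: nat \<Rightarrow> nat \<Rightarrow> (nat \<Rightarrow> real) \<Rightarrow> real.
        (\<forall>j\<le>\<kappa>. \<forall>l\<le>\<kappa> - j. hom_poly d (\<kappa> - j + l) (R j l)) \<and>
        R \<kappa> 0 = (\<lambda>X. 1) \<and>
        (\<forall>j\<le>\<kappa>. \<forall>l\<le>\<kappa> - j.
            simple_wrt ((\<lambda>j. lin_form d (\<mu> j)) ` {..<k} \<union> (\<lambda>j. quad_form d (S j)) ` {..<k})
              A B (R j l)) \<and>
        (\<forall>a\<ge>\<kappa>. \<forall>X. (\<Sum>j\<le>\<kappa>. \<Sum>l\<le>\<kappa> - j.
            (if l \<le> a - \<kappa> then primary_term d k \<mu> S P (a - \<kappa> + j - l) X * R j l X
                               / fact (a - \<kappa> - l) else 0)) = 0))"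
proof -
  show ?thesis
  proof (rule exI[of _ "Ab \<kappa>"], rule exI[of _ \<kappa>], intro allI impI)
    fix d :: nat and \<mu> :: "nat \<Rightarrow> nat \<Rightarrow> real" and S :: "nat \<Rightarrow> nat \<Rightarrow> nat \<Rightarrow> real"
      and P :: "nat \<Rightarrow> (nat \<Rightarrow> real) \<Rightarrow> real"
    assume "0 < d" "\<forall>j<k. covariance_ok d (S j)"
    assume polys: "\<forall>j<k. poly_deg_le d m (P j)"
    define SS where "SS = (\<lambda>j. lin_form d (\<mu> j)) ` {..<k} \<union> (\<lambda>j. quad_form d (S j)) ` {..<k}"
    define ps where "ps = fl d \<mu> S m k"
    define R where "R = coefs ps"
    have len: "length ps = \<kappa>" unfolding ps_def fl_length \<kappa>_def ..
    have psS: "\<forall>p\<in>set ps. fst p \<in> SS \<and> snd p \<in> SS"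
      unfolding ps_def SS_def using fl_set by fastforce
    have psH: "\<forall>p\<in>set ps. hom_poly d 1 (fst p) \<and> hom_poly d 2 (snd p)"
      unfolding ps_def using fl_set hom_lin hom_quad by fastforce
    show "\<exists>R :: nat \<Rightarrow> nat \<Rightarrow> (nat \<Rightarrow> real) \<Rightarrow> real.
        (\<forall>j\<le>\<kappa>. \<forall>l\<le>\<kappa> - j. hom_poly d (\<kappa> - j + l) (R j l)) \<and>
        R \<kappa> 0 = (\<lambda>X. 1) \<and>
        (\<forall>j\<le>\<kappa>. \<forall>l\<le>\<kappa> - j.
            simple_wrt ((\<lambda>j. lin_form d (\<mu> j)) ` {..<k} \<union> (\<lambda>j. quad_form d (S j)) ` {..<k})
              (Ab \<kappa>) \<kappa> (R j l)) \<and>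
        (\<forall>a\<ge>\<kappa>. \<forall>X. (\<Sum>j\<le>\<kappa>. \<Sum>l\<le>\<kappa> - j.
            (if l \<le> a - \<kappa> then primary_term d k \<mu> S P (a - \<kappa> + j - l) X * R j l X
                               / fact (a - \<kappa> - l) else 0)) = 0)"
    proof (intro exI[of _ R] conjI allI impI)
      fix j l assume "j \<le> \<kappa>" "l \<le> \<kappa> - j"
      show "hom_poly d (\<kappa> - j + l) (R j l)"
        using coefs_hom[OF psH, of j l] len \<open>j \<le> \<kappa>\<close> by (simp add: R_def)
    next
      show "R \<kappa> 0 = (\<lambda>X. 1)" using coefs_lead[of ps] len by (simp add: R_def)
    next
      fix j l assume "j \<le> \<kappa>" "l \<le> \<kappa> - j"
      show "simple_wrt ((\<lambda>j. lin_form d (\<mu> j)) ` {..<k} \<union> (\<lambda>j. quad_form d (S j)) ` {..<k})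
              (Ab \<kappa>) \<kappa> (R j l)"
        using coefs_simple[OF psS, of j l] len by (simp add: R_def SS_def)
    next
      fix a :: nat and X :: "nat \<Rightarrow> real"
      assume a: "\<kappa> \<le> a"
      define n where "n = a - \<kappa>"
      define f where "f r = primary_term d k \<mu> S P r X" for r
      define aa where "aa j = lin_form d (\<mu> j) X" for j
      define bb where "bb j = quad_form d (S j) X" for j
      have "\<forall>j. \<exists>QE. j < k \<longrightarrow> ((\<lambda>y. P j (\<lambda>i. X i * y)) has_fps_expansion fst QE \<and> pdeg (fst QE) m \<and>
          (\<lambda>y. exp (aa j * y + bb j * y\<^sup>2 / 2)) has_fps_expansion snd QE \<and>
          fps_deriv (snd QE) = (fps_const (aa j) + fps_const (bb j) * fps_X) * snd QE)"
      proof (intro allI)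
        fix j
        show "\<exists>QE. j < k \<longrightarrow> ((\<lambda>y. P j (\<lambda>i. X i * y)) has_fps_expansion fst QE \<and> pdeg (fst QE) m \<and>
          (\<lambda>y. exp (aa j * y + bb j * y\<^sup>2 / 2)) has_fps_expansion snd QE \<and>
          fps_deriv (snd QE) = (fps_const (aa j) + fps_const (bb j) * fps_X) * snd QE)"
        proof (cases "j < k")
          case True
          obtain Q where "(\<lambda>y. P j (\<lambda>i. X i * y)) has_fps_expansion Q \<and> pdeg Q m"
            using poly_expansion[of d m "P j" X] polys True by blast
          moreover obtain E where "(\<lambda>y. exp (aa j * y + bb j * y\<^sup>2 / 2)) has_fps_expansion E \<and>
             fps_deriv E = (fps_const (aa j) + fps_const (bb j) * fps_X) * E"
            using exp_gauss_expansion by blast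
          ultimately show ?thesis by (intro exI[of _ "(Q, E)"]) auto
        qed simp
      qed
      from choice[OF this] obtain QE where QEall: "\<forall>j. j < k \<longrightarrow> ( (\<lambda>y. P j (\<lambda>i. X i * y)) has_fps_expansion fst (QE j) \<and> pdeg (fst (QE j)) m \<and>
          (\<lambda>y. exp (aa j * y + bb j * y\<^sup>2 / 2)) has_fps_expansion snd (QE j) \<and>
          fps_deriv (snd (QE j)) = (fps_const (aa j) + fps_const (bb j) * fps_X) * snd (QE j))"
        by blast
      have QE: "\<And>j. j < k \<Longrightarrow> (\<lambda>y. P j (\<lambda>i. X i * y)) has_fps_expansion fst (QE j) \<and> pdeg (fst (QE j)) m \<and>
          (\<lambda>y. exp (aa j * y + bb j * y\<^sup>2 / 2)) has_fps_expansion snd (QE j) \<and>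
          fps_deriv (snd (QE j)) = (fps_const (aa j) + fps_const (bb j) * fps_X) * snd (QE j)"
        using QEall by blast
      define F where "F = (\<Sum>j<k. fst (QE j) * snd (QE j))"
      have gf: "gen_fun d k \<mu> S P X = (\<lambda>y. \<Sum>j<k. P j (\<lambda>i. X i * y) * exp (aa j * y + bb j * y\<^sup>2 / 2))"
        by (simp add: gen_fun_def aa_def bb_def fun_eq_iff)
      have expF: "gen_fun d k \<mu> S P X has_fps_expansion F"
        unfolding gf F_def by (intro has_fps_expansion_sum has_fps_expansion_mult) (use QE in auto)
      have coef: "fps_nth F r = f r / fact r" for r
        unfolding f_def primary_term_def by (rule real_fps_nth_expansion[OF expF])
      have zero: "opr X ps F = 0"
      proof -
        have "opr X ps (fst (QE j) * snd (QE j)) = 0" if j: "j < k" for j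
        proof -
          have E: "fps_deriv (snd (QE j)) = (fps_const (lin_form d (\<mu> j) X) + fps_const (quad_form d (S j) X) * fps_X) * snd (QE j)"
            using QE[OF j] by (simp add: aa_def bb_def)
          obtain Q' where "opr X (fl d \<mu> S m k) (fst (QE j) * snd (QE j)) = Q' * snd (QE j)" "j < k \<longrightarrow> Q' = 0"
            using annihilate[where d=d and \<mu>=\<mu> and S=S and j=j and X=X and E="snd (QE j)" and Q="fst (QE j)" and m=m and i=k, OF E] QE[OF j] by blast
          then show ?thesis using j by (simp add: ps_def)
        qed
        then show ?thesis unfolding F_def opr_sum by simp
      qed
      have "fps_nth (opr X ps F) n = fps_nth (NF X (Suc \<kappa>) R F) n"
        using opr_NF[of ps "Suc \<kappa>" X F] len by (simp add: R_def)
      also have "\<dots> = (\<Sum>j\<le>Suc \<kappa>. \<Sum>l\<le>Suc \<kappa>. if l \<le> n then R j l X * f (n - l + j) / fact (n - l) else 0)"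
        by (rule NF_nth[OF coef])
      finally have main: "(\<Sum>j\<le>Suc \<kappa>. \<Sum>l\<le>Suc \<kappa>. if l \<le> n then R j l X * f (n - l + j) / fact (n - l) else 0) = 0"
        using zero by simp
      have Rz: "R j l X = 0" if "\<kappa> < j + l" for j l
        using coefs_support[of ps j l X] that len by (simp add: R_def)
      define h where "h j l = (if l \<le> a - \<kappa> then primary_term d k \<mu> S P (a - \<kappa> + j - l) X * R j l X
                               / fact (a - \<kappa> - l) else 0)" for j l
      have hz: "h j l = 0" if "\<kappa> < j + l" for j l using Rz[OF that] by (simp add: h_def)
      have "(\<Sum>j\<le>\<kappa>. \<Sum>l\<le>\<kappa> - j. h j l) = (\<Sum>j\<le>\<kappa>. \<Sum>l\<le>Suc \<kappa>. h j l)"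
      proof (rule sum.cong[OF refl])
        fix j assume "j \<in> {..\<kappa>}"
        show "(\<Sum>l\<le>\<kappa> - j. h j l) = (\<Sum>l\<le>Suc \<kappa>. h j l)"
        proof (rule sum.mono_neutral_left)
          show "\<forall>i\<in>{..Suc \<kappa>} - {..\<kappa> - j}. h j i = 0"
          proof
            fix i assume "i \<in> {..Suc \<kappa>} - {..\<kappa> - j}"
            then have "\<kappa> < j + i" using \<open>j \<in> {..\<kappa>}\<close> by auto
            then show "h j i = 0" by (rule hz)
          qed
        qed auto
      qed
      also have "\<dots> = (\<Sum>j\<le>Suc \<kappa>. \<Sum>l\<le>Suc \<kappa>. h j l)"
        using hz by simp
      also have "\<dots> = (\<Sum>j\<le>Suc \<kappa>. \<Sum>l\<le>Suc \<kappa>. if l \<le> n then R j l X * f (n - l + j) / fact (n - l) else 0)"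
      proof (intro sum.cong refl)
        fix j l
        show "h j l = (if l \<le> n then R j l X * f (n - l + j) / fact (n - l) else 0)"
        proof (cases "l \<le> n")
          case True
          then have "a - \<kappa> + j - l = n - l + j" unfolding n_def by simp
          then show ?thesis using True unfolding h_def n_def[symmetric] f_def by simp
        next
          case False then show ?thesis unfolding h_def n_def[symmetric] by simp
        qed
      qed
      finally show "(\<Sum>j\<le>\<kappa>. \<Sum>l\<le>\<kappa> - j.
            (if l \<le> a - \<kappa> then primary_term d k \<mu> S P (a - \<kappa> + j - l) X * R j l X
                               / fact (a - \<kappa> - l) else 0)) = 0"
        using main by (simp add: h_def)
    qed
  qed
qed

end
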